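(* Let $\rho$ be a qubit state and write $p_{00}=\langle 0|\rho|0\rangle$, $p_{01}=\langle 0|\rho|1\rangle$ in the eigenbasis $\{|0\rangle,|1\rangle\}$ of $L=|1\rangle\langle 1|$. Let $L_{AB}=L\otimes\mathbb{I}+\mathbb{I}\otimes L$ on two qubits $A,B$. Define $$\Delta M_A^{(1)}:=\max_{V_{AB}} M^{(1)}(\sigma_A)-M^{(1)}(\rho),\qquad \sigma_A=\mathrm{tr}_B\big[V_{AB}(\rho\otimes\rho)V_{AB}^\dagger\big],$$ where the maximum is over all unitaries $V_{AB}$ with $[V_{AB},L_{AB}]=0$. Then $$\Delta M_A^{(1)}=|p_{01}|\Big(\sqrt{1+(2p_{00}-1)^2}-1\Big),$$ and this maximum is achieved by the unitary that acts as the identity on $|00\rangle$ and $|11\rangle$ and, on the degenerate subspace spanned by $\{|01\rangle,|10\rangle\}$, acts as the rotation $|01\rangle\mapsto\cos\theta|01\rangle+\sin\theta|10\rangle$, $|10\rangle\mapsto-\sin\theta|01\rangle+\cos\theta|10\rangle$ with $\cos\theta=1/\sqrt{1+(2p_{00}-1)^2}$ and $\sin\theta=(2p_{00}-1)/\sqrt{1+(2p_{00}-1)^2}$ (i.e. $\theta=\cos^{-1}\big(1/\sqrt{1+(2p_{00}-1)^2}\big)$ up to this sign convention).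
   Context: For a qubit with $L=|1\rangle\langle1|$, the first mode of an operator $\rho$ is $\rho^{(1)}=|1\rangle\langle1|\rho|0\rangle\langle0|$, and the coherence measure is $M^{(1)}(\rho):=\|\rho^{(1)}\|_1$ (trace norm), so that $M^{(1)}(\rho)=|p_{01}|$. Unitaries commuting with $L_{AB}$ are called allowed unitaries. *)

theory Defs
  imports "HOL-Analysis.Analysis"
begin

text \<open>Qubit operators are 2x2 complex matrices indexed by the type 2 (basis |0>, |1>);
two-qubit operators are indexed by 2 \<times> 2, the pair (a,b) standing for |ab>.
Entry A $ i $ j is the matrix element <i|A|j>.\<close>

type_synonym qop = "complex^2^2"
type_synonym qop2 = "complex^(2 \<times> 2)^(2 \<times> 2)"

definition mat_adj :: "complex^'n^'n \<Rightarrow> complex^'n^'n" where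
  "mat_adj A = (\<chi> i j. cnj (A $ j $ i))"

definition cunitary :: "complex^'n^'n \<Rightarrow> bool" where
  "cunitary U \<longleftrightarrow> U ** mat_adj U = mat 1 \<and> mat_adj U ** U = mat 1"

definition cinner :: "complex^'n \<Rightarrow> complex^'n \<Rightarrow> complex" where
  "cinner v w = (\<Sum>i\<in>UNIV. cnj (v $ i) * w $ i)"

definition psd :: "complex^'n^'n \<Rightarrow> bool" where
  "psd A \<longleftrightarrow> (\<forall>v. Im (cinner v (A *v v)) = 0 \<and> Re (cinner v (A *v v)) \<ge> 0)"

definition density :: "complex^'n^'n \<Rightarrow> bool" where
  "density \<rho> \<longleftrightarrow> psd \<rho> \<and> trace \<rho> = 1"

definition trace_norm :: "complex^'n^'n \<Rightarrow> real" where
  "trace_norm A = Re (trace (THE S. psd S \<and> S ** S = mat_adj A ** A))"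

definition proj :: "2 \<Rightarrow> qop" where
  "proj k = (\<chi> i j. if i = k \<and> j = k then 1 else 0)"

definition Lop :: qop where "Lop = proj 1"

definition tensor :: "qop \<Rightarrow> qop \<Rightarrow> qop2" where
  "tensor A B = (\<chi> p q. A $ fst p $ fst q * B $ snd p $ snd q)"

definition LAB :: qop2 where
  "LAB = tensor Lop (mat 1) + tensor (mat 1) Lop"

definition allowed :: "qop2 \<Rightarrow> bool" where
  "allowed V \<longleftrightarrow> cunitary V \<and> V ** LAB = LAB ** V"

definition ptrace_B :: "qop2 \<Rightarrow> qop" where
  "ptrace_B X = (\<chi> i k. \<Sum>j\<in>UNIV. X $ (i, j) $ (k, j))"

definition mode1 :: "qop \<Rightarrow> qop" where
  "mode1 \<rho> = proj 1 ** \<rho> ** proj 0"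

definition M1 :: "qop \<Rightarrow> real" where
  "M1 \<rho> = trace_norm (mode1 \<rho>)"

definition sigmaA :: "qop \<Rightarrow> qop2 \<Rightarrow> qop" where
  "sigmaA \<rho> V = ptrace_B (V ** tensor \<rho> \<rho> ** mat_adj V)"

definition rotV :: "real \<Rightarrow> real \<Rightarrow> qop2" where
  "rotV c s = (\<chi> p q.
     if p = q \<and> (p = (0,0) \<or> p = (1,1)) then 1
     else if p = (0,1) \<and> q = (0,1) then complex_of_real c
     else if p = (1,0) \<and> q = (0,1) then complex_of_real s
     else if p = (0,1) \<and> q = (1,0) then complex_of_real (- s)
     else if p = (1,0) \<and> q = (1,0) then complex_of_real c
     else 0)"

end

theory Submission
  imports Defs
begin

lemma ex2: "(x::2) = 0 \<or> x = 1"
  using exhaust_2[of x] by auto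
lemma UNIV2: "(UNIV::2 set) = {0,1}" using ex2 by auto
lemma sum2: "(\<Sum>i\<in>(UNIV::2 set). f i) = f 0 + f 1" unfolding UNIV2 by simp
lemma all2: "(\<forall>i::2. P i) \<longleftrightarrow> P 0 \<and> P 1" by (metis ex2)
lemma UNIV22: "(UNIV::(2\<times>2) set) = {(0,0),(0,1),(1,0),(1,1)}" using UNIV_Times_UNIV UNIV2 by auto
lemma sum22: "(\<Sum>p\<in>(UNIV::(2\<times>2) set). f p) = f(0,0)+f(0,1)+f(1,0)+f(1,1)"
  unfolding UNIV22 by (simp add: algebra_simps)
lemma all22: "(\<forall>p::2\<times>2. P p) \<longleftrightarrow> P (0,0) \<and> P (0,1) \<and> P (1,0) \<and> P(1,1)" 
  by (metis UNIV22 UNIV_I insertE empty_iff)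

definition vec2 :: "complex \<Rightarrow> complex \<Rightarrow> complex^2" where "vec2 a b = (\<chi> i. if i = 0 then a else b)"
lemma vec2_simps[simp]: "vec2 a b $ 0 = a" "vec2 a b $ 1 = b" by (simp_all add: vec2_def)

lemma cinner_form: "cinner v ((A::qop) *v v) = cnj(v$0)*(A$0$0* v$0 + A$0$1* v$1) + cnj(v$1)*(A$1$0* v$0+A$1$1* v$1)"
  by (simp add: cinner_def matrix_vector_mult_def sum2)

lemma psd_facts: assumes "psd (A::qop)"
  shows "A$0$1 = cnj (A$1$0)" "Im(A$0$0)=0" "Re(A$0$0) \<ge> 0" "Im(A$1$1)=0" "Re(A$1$1)\<ge>0"
proof -
  have h: "Im (cinner v (A *v v)) = 0 \<and> Re (cinner v (A *v v)) \<ge> 0" for v using assms psd_def by blast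
  note h1 = h[of "vec2 1 0", unfolded cinner_form, simplified]
  note h2 = h[of "vec2 0 1", unfolded cinner_form, simplified]
  note h3 = h[of "vec2 1 1", unfolded cinner_form, simplified]
  note h4 = h[of "vec2 1 \<i>", unfolded cinner_form, simplified]
  show "Im(A$0$0)=0" "Re(A$0$0) \<ge> 0" "Im(A$1$1)=0" "Re(A$1$1)\<ge>0" using h1 h2 by auto
  show "A$0$1 = cnj (A$1$0)" using h1 h2 h3 h4 by (simp add: complex_eq_iff)
qed

lemma vec_eq2: "((A::qop) = B) \<longleftrightarrow> A$0$0 = B$0$0 \<and> A$0$1 = B$0$1 \<and> A$1$0 = B$1$0 \<and> A$1$1 = B$1$1"
  by (auto simp: vec_eq_iff all2)

lemma mm2: "((A::qop) ** B) $ i $ j = A$i$0 * B$0$j + A$i$1 * B$1$j"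
  by (simp add: matrix_matrix_mult_def sum2)

lemma sqrt_unique:
  assumes "psd (S::qop)" "S ** S = M" "M$0$0 = of_real (t^2)" "M$0$1 = 0" "M$1$0 = 0" "M$1$1 = 0" "t \<ge> 0"
  shows "S = (\<chi> i j. if i = 0 \<and> j = 0 then of_real t else 0)"
proof -
  note p = psd_facts[OF assms(1)]
  have e11: "S$1$0 * S$0$1 + S$1$1 * S$1$1 = 0" using assms(2,6) by (metis mm2)
  have e00: "S$0$0 * S$0$0 + S$0$1 * S$1$0 = of_real (t^2)" using assms(2,3) by (metis mm2)
  obtain d where d: "S$1$1 = of_real d" "d \<ge> 0" using p(4,5) by (metis complex_eq complex_of_real_def mult_zero_right add_0_right Complex_eq)
  obtain a where a: "S$0$0 = of_real a" "a \<ge> 0" using p(2,3) by (metis complex_eq complex_of_real_def mult_zero_right add_0_right Complex_eq)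
  have "S$1$0 * cnj (S$1$0) + of_real (d*d) = 0" using e11 p(1) d by simp
  then have "of_real ((cmod (S$1$0))^2 + d*d) = (0::complex)" by (simp only: of_real_add complex_norm_square of_real_mult)
  then have "(cmod (S$1$0))^2 + d*d = 0" by (metis of_real_eq_0_iff)
  then have z: "S$1$0 = 0" "d = 0"
  proof -
    have "(cmod (S$1$0))^2 = 0" "d*d = 0" using \<open>(cmod (S$1$0))^2 + d*d = 0\<close> d(2)
      by (smt (verit) zero_le_power2 mult_nonneg_nonneg)+
    then show "S$1$0 = 0" "d = 0" by simp_all
  qed
  have "of_real (a*a) = (of_real (t^2)::complex)" using e00 z p(1) a by simp
  then have "a*a = t^2" by (metis of_real_eq_iff)
  then have "a = t" using a(2) assms(7) by (metis power2_eq_square power2_eq_iff_nonneg)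
  show ?thesis using z d a p(1) \<open>a = t\<close> by (simp add: vec_eq2)
qed

lemma trace_norm_single:
  assumes "(A::qop)$0$0 = 0" "A$0$1 = 0" "A$1$1 = 0"
  shows "trace_norm A = cmod (A$1$0)"
proof -
  define t where "t = cmod (A$1$0)"
  define D :: qop where "D = (\<chi> i j. if i = 0 \<and> j = 0 then of_real t else 0)"
  define M where "M = mat_adj A ** A"
  have M: "M$0$0 = of_real (t^2)" "M$0$1 = 0" "M$1$0 = 0" "M$1$1 = 0"
    using assms by (simp_all add: M_def mm2 mat_adj_def t_def complex_norm_square[symmetric] mult.commute del: of_real_power)
  have Dpsd: "psd D"
    unfolding psd_def cinner_form by (simp add: D_def t_def mult.left_commute[of _ "of_real _"] complex_norm_square[symmetric])
  have DD: "D ** D = M" using M by (simp add: vec_eq2 mm2 D_def power2_eq_square)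
  have "(THE S. psd S \<and> S ** S = M) = D"
    apply (rule the_equality)
    using Dpsd DD apply simp
    using sqrt_unique[OF _ _ M] t_def D_def by auto
  then show ?thesis unfolding trace_norm_def M_def[symmetric] by (simp add: trace_def sum2 D_def t_def)
qed

lemma mode1_entries: "mode1 X $ 0 $ 0 = 0" "mode1 X $ 0 $ 1 = 0" "mode1 X $ 1 $ 1 = 0" "mode1 X $ 1 $ 0 = X$1$0"
  by (simp_all add: mode1_def mm2 proj_def)

lemma M1_eq: "M1 X = cmod (X$1$0)"
  unfolding M1_def by (simp add: trace_norm_single mode1_entries)

lemma mm4: "((A::qop2) ** B) $ p $ q = A$p$(0,0) * B$(0,0)$q + A$p$(0,1) * B$(0,1)$q + A$p$(1,0) * B$(1,0)$q + A$p$(1,1) * B$(1,1)$q"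
  by (simp add: matrix_matrix_mult_def sum22)

lemma LAB_entries: "LAB $ p $ q = (if p = q then (if p = (0,0) then 0 else if p = (1,1) then 2 else 1) else 0)"
  using ex2[of "fst p"] ex2[of "snd p"] ex2[of "fst q"] ex2[of "snd q"]
  by (cases p; cases q; auto simp: LAB_def tensor_def Lop_def proj_def mat_def)

lemma allowed_zeros:
  assumes "allowed V"
  shows "V$(0,0)$(0,1) = 0" "V$(0,0)$(1,0) = 0" "V$(0,0)$(1,1) = 0"
        "V$(0,1)$(0,0) = 0" "V$(0,1)$(1,1) = 0" "V$(1,0)$(0,0) = 0" "V$(1,0)$(1,1) = 0"
        "V$(1,1)$(0,0) = 0" "V$(1,1)$(0,1) = 0" "V$(1,1)$(1,0) = 0"
proof -
  have c: "(V ** LAB)$p$q = (LAB ** V)$p$q" for p q using assms allowed_def by simp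
  show "V$(0,0)$(0,1) = 0" "V$(0,0)$(1,0) = 0" "V$(0,0)$(1,1) = 0"
        "V$(0,1)$(0,0) = 0" "V$(0,1)$(1,1) = 0" "V$(1,0)$(0,0) = 0" "V$(1,0)$(1,1) = 0"
        "V$(1,1)$(0,0) = 0" "V$(1,1)$(0,1) = 0" "V$(1,1)$(1,0) = 0"
    using c[of "(0,0)" "(0,1)"] c[of "(0,0)" "(1,0)"] c[of "(0,0)" "(1,1)"]
      c[of "(0,1)" "(0,0)"] c[of "(0,1)" "(1,1)"] c[of "(1,0)" "(0,0)"] c[of "(1,0)" "(1,1)"]
      c[of "(1,1)" "(0,0)"] c[of "(1,1)" "(0,1)"] c[of "(1,1)" "(1,0)"]
    by (simp_all add: mm4 LAB_entries)
qed

lemma allowed_unit: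
  assumes "allowed V"
  shows "cnj (V$(0,0)$(0,0)) * V$(0,0)$(0,0) = 1" "cnj (V$(1,1)$(1,1)) * V$(1,1)$(1,1) = 1"
    "cnj (V$(0,1)$(0,1)) * V$(0,1)$(0,1) + cnj (V$(1,0)$(0,1)) * V$(1,0)$(0,1) = 1"
    "cnj (V$(0,1)$(1,0)) * V$(0,1)$(1,0) + cnj (V$(1,0)$(1,0)) * V$(1,0)$(1,0) = 1"
    "cnj (V$(0,1)$(0,1)) * V$(0,1)$(1,0) + cnj (V$(1,0)$(0,1)) * V$(1,0)$(1,0) = 0"
proof -
  note z = allowed_zeros[OF assms]
  have u: "(mat_adj V ** V)$p$q = mat 1 $p$q" for p q using assms by (simp add: allowed_def cunitary_def)
  show "cnj (V$(0,0)$(0,0)) * V$(0,0)$(0,0) = 1" "cnj (V$(1,1)$(1,1)) * V$(1,1)$(1,1) = 1"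
    "cnj (V$(0,1)$(0,1)) * V$(0,1)$(0,1) + cnj (V$(1,0)$(0,1)) * V$(1,0)$(0,1) = 1"
    "cnj (V$(0,1)$(1,0)) * V$(0,1)$(1,0) + cnj (V$(1,0)$(1,0)) * V$(1,0)$(1,0) = 1"
    "cnj (V$(0,1)$(0,1)) * V$(0,1)$(1,0) + cnj (V$(1,0)$(0,1)) * V$(1,0)$(1,0) = 0"
    using u[of "(0,0)" "(0,0)"] u[of "(1,1)" "(1,1)"] u[of "(0,1)" "(0,1)"] u[of "(1,0)" "(1,0)"] u[of "(0,1)" "(1,0)"]
    by (simp_all add: mm4 mat_adj_def mat_def z)
qed

lemma sigma10:
  assumes "V$(0,0)$(0,1) = 0" "V$(0,0)$(1,0) = 0" "V$(0,0)$(1,1) = 0"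
        "V$(0,1)$(0,0) = 0" "V$(0,1)$(1,1) = 0" "V$(1,0)$(0,0) = 0" "V$(1,0)$(1,1) = 0"
        "V$(1,1)$(0,0) = 0" "V$(1,1)$(0,1) = 0" "V$(1,1)$(1,0) = 0"
  shows "sigmaA \<rho> V $1$0 = cnj(V$(0,0)$(0,0)) * \<rho>$0$0 * \<rho>$1$0 * (V$(1,0)$(0,1) + V$(1,0)$(1,0))
     + V$(1,1)$(1,1) * \<rho>$1$0 * \<rho>$1$1 * cnj(V$(0,1)$(0,1) + V$(0,1)$(1,0))"
  using assms by (simp add: sigmaA_def ptrace_B_def mm4 sum2 mat_adj_def tensor_def algebra_simps)



lemma rotV_entries: "rotV c s $ (0,0) $ (0,0) = 1" "rotV c s $ (1,1) $ (1,1) = 1"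
  "rotV c s $ (0,1) $ (0,1) = of_real c" "rotV c s $ (1,0) $ (1,0) = of_real c"
  "rotV c s $ (1,0) $ (0,1) = of_real s" "rotV c s $ (0,1) $ (1,0) = of_real (-s)"
  "rotV c s $ (0,0) $ (0,1) = 0" "rotV c s $ (0,0) $ (1,0) = 0" "rotV c s $ (0,0) $ (1,1) = 0"
  "rotV c s $ (0,1) $ (0,0) = 0" "rotV c s $ (0,1) $ (1,1) = 0"
  "rotV c s $ (1,0) $ (0,0) = 0" "rotV c s $ (1,0) $ (1,1) = 0"
  "rotV c s $ (1,1) $ (0,0) = 0" "rotV c s $ (1,1) $ (0,1) = 0" "rotV c s $ (1,1) $ (1,0) = 0"
  by (simp_all add: rotV_def)

lemma mat1_entries: "(mat 1 :: qop2) $ p $ q = (if p = q then 1 else 0)" by (simp add: mat_def)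

lemma vec_eq4: "(A::qop2) = B \<longleftrightarrow> (\<forall>p\<in>{(0,0),(0,1),(1,0),(1,1)}. \<forall>q\<in>{(0,0),(0,1),(1,0),(1,1)}. A$p$q = B$p$q)"
  unfolding UNIV22[symmetric] by (simp add: vec_eq_iff)

lemma adj_entry: "mat_adj A $ i $ j = cnj (A $ j $ i)" by (simp add: mat_adj_def)

lemma rot_comm: "rotV c s ** LAB = LAB ** rotV c s"
  unfolding vec_eq4 ball_simps
  by (simp add: mm4 rotV_entries LAB_entries)

lemma rot_unitary: assumes "(c::real) * c + s * s = 1" shows "cunitary (rotV c s)"
proof -
  have h: "complex_of_real c * complex_of_real c + complex_of_real s * complex_of_real s = 1"
    by (metis assms of_real_mult of_real_add of_real_1)
  have h2: "complex_of_real s * complex_of_real s + complex_of_real c * complex_of_real c = 1"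
    using h by (simp add: add.commute)
  show ?thesis unfolding cunitary_def vec_eq4 ball_simps
    by (simp add: mm4 rotV_entries adj_entry mat1_entries h h2 mult.commute)
qed

lemma rot_allowed: "(c::real) * c + s * s = 1 \<Longrightarrow> allowed (rotV c s)"
  using rot_unitary rot_comm allowed_def by blast

lemma unit_norm: "cnj z * z = 1 \<Longrightarrow> cmod z = 1"
proof -
  assume h: "cnj z * z = 1"
  have "(cmod z)^2 = 1" using complex_mod_mult_cnj[of z] h by (simp add: mult.commute)
  then show ?thesis using norm_ge_zero[of z] by (auto simp: power2_eq_1_iff)
qed

lemma bound:
  assumes "allowed V" "\<rho>$0$0 = of_real a" "\<rho>$1$1 = of_real b" "a \<ge> 0" "b \<ge> 0"
  shows "cmod (sigmaA \<rho> V $1$0) \<le> cmod (\<rho>$1$0) * sqrt (2*(a^2+b^2))"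
proof -
  note z = allowed_zeros[OF assms(1)]
  note un = allowed_unit[OF assms(1)]
  define u where "u = V$(1,0)$(0,1) + V$(1,0)$(1,0)"
  define w where "w = V$(0,1)$(0,1) + V$(0,1)$(1,0)"
  define r where "r = cmod (\<rho>$1$0)"
  have s: "sigmaA \<rho> V $1$0 = cnj(V$(0,0)$(0,0)) * of_real a * \<rho>$1$0 * u + V$(1,1)$(1,1) * \<rho>$1$0 * of_real b * cnj w"
    using sigma10[OF z] assms(2,3) u_def w_def by simp
  have n1: "cmod (V$(0,0)$(0,0)) = 1" "cmod (V$(1,1)$(1,1)) = 1" using un(1,2) unit_norm by auto
  have "cmod (sigmaA \<rho> V $1$0) \<le> cmod (cnj(V$(0,0)$(0,0)) * of_real a * \<rho>$1$0 * u) + cmod (V$(1,1)$(1,1) * \<rho>$1$0 * of_real b * cnj w)"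
    unfolding s by (rule norm_triangle_ineq)
  also have "\<dots> = r * (a * cmod u + b * cmod w)"
    using n1 assms(4,5) by (simp add: norm_mult r_def algebra_simps)
  finally have A: "cmod (sigmaA \<rho> V $1$0) \<le> r * (a * cmod u + b * cmod w)" .
  have "u * cnj u + w * cnj w = (cnj (V$(0,1)$(0,1)) * V$(0,1)$(0,1) + cnj (V$(1,0)$(0,1)) * V$(1,0)$(0,1))
     + (cnj (V$(0,1)$(1,0)) * V$(0,1)$(1,0) + cnj (V$(1,0)$(1,0)) * V$(1,0)$(1,0))
     + (cnj (V$(0,1)$(0,1)) * V$(0,1)$(1,0) + cnj (V$(1,0)$(0,1)) * V$(1,0)$(1,0))
     + cnj (cnj (V$(0,1)$(0,1)) * V$(0,1)$(1,0) + cnj (V$(1,0)$(0,1)) * V$(1,0)$(1,0))"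
    unfolding u_def w_def by (simp add: algebra_simps)
  also have "\<dots> = 2" using un(3,4,5) by simp
  finally have "of_real ((cmod u)^2 + (cmod w)^2) = (2::complex)"
    by (simp only: of_real_add complex_norm_square)
  then have uw: "(cmod u)^2 + (cmod w)^2 = 2" by (metis of_real_eq_iff of_real_numeral)
  have "(a * cmod u + b * cmod w)^2 \<le> (a^2+b^2) * ((cmod u)^2 + (cmod w)^2)"
  proof -
    have "0 \<le> (a * cmod w - b * cmod u)^2" by simp
    moreover have "(a^2+b^2) * ((cmod u)^2 + (cmod w)^2) = (a * cmod u + b * cmod w)^2 + (a * cmod w - b * cmod u)^2"
      by algebra
    ultimately show ?thesis by linarith
  qed
  then have "a * cmod u + b * cmod w \<le> sqrt (2*(a^2+b^2))" using uw by (intro real_le_rsqrt) (simp add: mult.commute)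
  then have "r * (a * cmod u + b * cmod w) \<le> r * sqrt (2*(a^2+b^2))"
    by (rule mult_left_mono) (simp add: r_def)
  then show ?thesis unfolding r_def[symmetric] using A by linarith
qed

theorem mainTheorem2:
  fixes \<rho> :: qop
  assumes "density \<rho>"
  defines "p00 \<equiv> Re (\<rho> $ 0 $ 0)"
    and "p01 \<equiv> \<rho> $ 0 $ 1"
  defines "c \<equiv> 1 / sqrt (1 + (2 * p00 - 1)\<^sup>2)"
    and "s \<equiv> (2 * p00 - 1) / sqrt (1 + (2 * p00 - 1)\<^sup>2)"
  shows "allowed (rotV c s)
    \<and> (\<forall>V. allowed V \<longrightarrow> M1 (sigmaA \<rho> V) \<le> M1 (sigmaA \<rho> (rotV c s)))
    \<and> (SUP V\<in>{V. allowed V}. M1 (sigmaA \<rho> V)) - M1 \<rho>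
        = cmod p01 * (sqrt (1 + (2 * p00 - 1)\<^sup>2) - 1)
    \<and> M1 (sigmaA \<rho> (rotV c s)) - M1 \<rho>
        = cmod p01 * (sqrt (1 + (2 * p00 - 1)\<^sup>2) - 1)"
proof -
  have psd: "psd \<rho>" and tr: "trace \<rho> = 1" using assms(1) density_def by auto
  note pf = psd_facts[OF psd]
  have r00: "\<rho>$0$0 = of_real p00" using pf(2) p00_def by (simp add: complex_eq_iff)
  have t: "\<rho>$0$0 + \<rho>$1$1 = 1" using tr by (simp add: trace_def sum2)
  have r11: "\<rho>$1$1 = of_real (1 - p00)" using t r00 by (metis add_diff_cancel_left' of_real_1 of_real_diff)
  have a0: "p00 \<ge> 0" using pf(3) p00_def by simp
  have b0: "1 - p00 \<ge> 0" using pf(5) r11 by simp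
  define N where "N = sqrt (1 + (2 * p00 - 1)\<^sup>2)"
  have Npos: "N > 0" unfolding N_def by (simp add: add_pos_nonneg)
  have NN: "N * N = 1 + (2 * p00 - 1)\<^sup>2" unfolding N_def by (simp add: add_nonneg_nonneg)
  have cN: "c = 1 / N" and sN: "s = (2 * p00 - 1) / N" unfolding c_def s_def N_def by simp_all
  have cs: "c * c + s * s = 1" unfolding cN sN using Npos NN
    by (simp add: field_simps power2_eq_square)
  have N2: "2 * (p00\<^sup>2 + (1 - p00)\<^sup>2) = 1 + (2 * p00 - 1)\<^sup>2" by (simp add: power2_eq_square algebra_simps)
  have r10: "cmod (\<rho>$1$0) = cmod p01" unfolding p01_def pf(1) by simp
  have M1rho: "M1 \<rho> = cmod p01" using M1_eq r10 by simp
  have real_id: "p00 * (s + c) + (1 - p00) * (c - s) = N"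
  proof -
    have "p00 * (s + c) + (1 - p00) * (c - s) = c + (2 * p00 - 1) * s" by (simp add: algebra_simps)
    also have "\<dots> = (N * N) / N" unfolding cN sN NN using Npos by (simp add: field_simps power2_eq_square)
    also have "\<dots> = N" using Npos by simp
    finally show ?thesis .
  qed
  have rotval: "sigmaA \<rho> (rotV c s) $1$0 = \<rho>$1$0 * of_real N"
  proof -
    have "sigmaA \<rho> (rotV c s) $1$0 = of_real p00 * \<rho>$1$0 * (of_real s + of_real c) + \<rho>$1$0 * of_real (1 - p00) * (of_real c - of_real s)"
      using sigma10[of "rotV c s" \<rho>] by (simp add: rotV_entries r00 r11)
    also have "\<dots> = \<rho>$1$0 * of_real (p00 * (s + c) + (1 - p00) * (c - s))"
      by (simp add: algebra_simps)
    finally show ?thesis using real_id by simp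
  qed
  have Mrot: "M1 (sigmaA \<rho> (rotV c s)) = cmod p01 * N"
    using M1_eq rotval r10 Npos by (simp add: norm_mult)
  have bnd: "M1 (sigmaA \<rho> V) \<le> cmod p01 * N" if "allowed V" for V
    using bound[OF that r00 r11 a0 b0] N2 M1_eq r10 N_def by simp
  have al: "allowed (rotV c s)" using rot_allowed cs by blast
  have sup: "(SUP V\<in>{V. allowed V}. M1 (sigmaA \<rho> V)) = M1 (sigmaA \<rho> (rotV c s))"
  proof (rule cSup_eq_maximum)
    show "M1 (sigmaA \<rho> (rotV c s)) \<in> (\<lambda>V. M1 (sigmaA \<rho> V)) ` {V. allowed V}"
      using al by blast
    show "x \<le> M1 (sigmaA \<rho> (rotV c s))" if "x \<in> (\<lambda>V. M1 (sigmaA \<rho> V)) ` {V. allowed V}" for x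
      using that bnd Mrot by auto
  qed
  show ?thesis using al bnd Mrot sup M1rho N_def by (simp add: algebra_simps)
qed
end
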